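(* Let $n\ge2$ and $\alpha\in\mathbb{Z}_2^n$. Then $$\max_{\beta,\gamma\in\mathbb{Z}_2^n}\mathrm{adp}^{\mathrm{XR}}_1(\alpha,\beta\to\gamma)=\mathrm{adp}^{\oplus}(\alpha,\alpha\to0)=\max_{\beta,\gamma\in\mathbb{Z}_2^n}\mathrm{adp}^{\oplus}(\alpha,\beta\to\gamma).$$
   Context: For $x\in\mathbb{Z}_2^n$, $x=(x_0,\dots,x_{n-1})$ is identified with the integer $\sum_i x_i2^{n-1-i}$; $+$ is addition modulo $2^n$, $\oplus$ is bitwise XOR, $x\lll r=(x_r,\dots,x_{n-1},x_0,\dots,x_{r-1})$. For $f:(\mathbb{Z}_2^n)^2\to\mathbb{Z}_2^n$, $\mathrm{adp}^f(\alpha,\beta\to\gamma)=4^{-n}\#\{(x,y): f(x+\alpha,y+\beta)=f(x,y)+\gamma\}$. $\mathrm{adp}^{\oplus}$ is this for $f(x,y)=x\oplus y$, and $\mathrm{adp}^{\mathrm{XR}}_r$ for $f(x,y)=(x\oplus y)\lll r$. *)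

theory Defs
  imports Main Complex_Main
begin

text \<open>Elements of Z_2^n are identified with naturals in {..<2^n}
 (x = sum x_i 2^(n-1-i)); + is addition mod 2^n, XOR is bitwise.\<close>

definition rotl :: "nat \<Rightarrow> nat \<Rightarrow> nat \<Rightarrow> nat" where
  "rotl n r x = (x * 2 ^ r) mod 2 ^ n + x div 2 ^ (n - r)"

definition adp :: "nat \<Rightarrow> (nat \<Rightarrow> nat \<Rightarrow> nat) \<Rightarrow> nat \<Rightarrow> nat \<Rightarrow> nat \<Rightarrow> real" where
  "adp n f a b g =
     real (card {(x, y). x < 2 ^ n \<and> y < 2 ^ n \<and>
        f ((x + a) mod 2 ^ n) ((y + b) mod 2 ^ n) = (f x y + g) mod 2 ^ n}) / 4 ^ n"

definition adp_xor :: "nat \<Rightarrow> nat \<Rightarrow> nat \<Rightarrow> nat \<Rightarrow> real" where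
  "adp_xor n a b g = adp n (\<lambda>x y. Bit_Operations.xor x y) a b g"

definition adp_XR :: "nat \<Rightarrow> nat \<Rightarrow> nat \<Rightarrow> nat \<Rightarrow> nat \<Rightarrow> real" where
  "adp_XR n r a b g = adp n (\<lambda>x y. rotl n r (Bit_Operations.xor x y)) a b g"

end

theory Submission
  imports Defs
begin

lemma card_pairs_sum:
  "card {(x, y). x < (N::nat) \<and> y < N \<and> P x y} = (\<Sum>x<N. \<Sum>y<N. if P x y then 1 else 0)"
proof -
  have e: "{(x, y). x < N \<and> y < N \<and> P x y} = Sigma {..<N} (\<lambda>x. {y. y < N \<and> P x y})"
    by auto
  have c: "card {y. y < N \<and> P x y} = (\<Sum>y<N. if P x y then 1 else 0)" for x
  proof -
    have "(\<Sum>y<N. (if P x y then 1 else 0::nat)) = card ({..<N} \<inter> {y. P x y})"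
      by (simp add: sum.If_cases)
    also have "{..<N} \<inter> {y. P x y} = {y. y < N \<and> P x y}" by auto
    finally show ?thesis by simp
  qed
  show ?thesis unfolding e by (subst card_SigmaI) (auto simp: c)
qed

lemma sum_split_pow:
  "(\<Sum>x<2^Suc m. f x) = (\<Sum>t<2. \<Sum>l<(2::nat)^m. f (l + 2^m * t))"
proof -
  have "(\<Sum>x<2^Suc m. f x) = (\<Sum>x<2 * 2^m. f x)" by simp
  also have "\<dots> = (\<Sum>t<2. sum f {t * 2^m..<t * 2^m + 2^m})"
    by (rule sum.nat_group[symmetric])
  also have "\<dots> = (\<Sum>t<2. \<Sum>l<(2::nat)^m. f (l + 2^m * t))"
  proof (rule sum.cong[OF refl])
    fix t :: nat
    show "sum f {t * 2^m..<t * 2^m + 2^m} = (\<Sum>l<2^m. f (l + 2^m * t))"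
      using sum.shift_bounds_nat_ivl[of f 0 "t*2^m" "2^m"]
      by (simp add: atLeast0LessThan mult.commute add.commute)
  qed
  finally show ?thesis .
qed

lemma sum2: "(\<Sum>i<(2::nat). f i) = f 0 + f 1"
  by (simp add: numeral_2_eq_2)

lemma xor_split:
  fixes xl yl xt yt m :: nat
  assumes "xl < 2^m" "yl < 2^m" "xt < 2" "yt < 2"
  shows "xor (xl + 2^m * xt) (yl + 2^m * yt) = xor xl yl + 2^m * ((xt + yt) mod 2)"
proof -
  let ?u = "xor (xl + 2^m * xt) (yl + 2^m * yt)"
  have tx: "take_bit m (xl + 2^m * xt) = xl" using assms by (simp add: take_bit_eq_mod)
  have ty: "take_bit m (yl + 2^m * yt) = yl" using assms by (simp add: take_bit_eq_mod)
  have dx: "drop_bit m (xl + 2^m * xt) = xt" using assms by (simp add: drop_bit_eq_div)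
  have dy: "drop_bit m (yl + 2^m * yt) = yt" using assms by (simp add: drop_bit_eq_div)
  have x2: "xor xt yt = (xt + yt) mod 2" using assms
    by (cases xt; cases yt) (auto simp: less_Suc_eq numeral_2_eq_2)
  have "?u = take_bit m ?u + 2^m * drop_bit m ?u"
    by (simp add: take_bit_eq_mod drop_bit_eq_div)
  also have "\<dots> = xor xl yl + 2^m * ((xt + yt) mod 2)"
    by (simp only: take_bit_xor drop_bit_xor tx ty dx dy x2)
  finally show ?thesis .
qed

definition okc :: "nat \<Rightarrow> nat \<Rightarrow> nat \<Rightarrow> nat \<Rightarrow> nat \<Rightarrow> nat \<Rightarrow> bool" where
  "okc m a b g x y \<longleftrightarrow> take_bit m (xor (xor (x + a) (y + b)) (xor x y + g)) = 0"

lemma take_bit_Suc_zero_iff: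
  "take_bit (Suc m) (z::nat) = 0 \<longleftrightarrow> take_bit m z = 0 \<and> even (drop_bit m z)"
proof -
  have "take_bit (Suc m) z = z mod (2^m * 2)"
    by (metis take_bit_eq_mod power_Suc2)
  also have "\<dots> = z mod 2^m + 2^m * (z div 2^m mod 2)"
    by (simp add: mod_mult2_eq)
  finally have "take_bit (Suc m) z = z mod 2^m + 2^m * (z div 2^m mod 2)" .
  then show ?thesis by (auto simp: take_bit_eq_mod drop_bit_eq_div)
qed

lemma split_add:
  fixes l t L T m :: nat
  shows "take_bit m ((l + 2^m * t) + (L + 2^m * T)) = take_bit m (l + L)"
    and "drop_bit m ((l + 2^m * t) + (L + 2^m * T)) = (l + L) div 2^m + t + T"
proof -
  have e: "(l + 2^m * t) + (L + 2^m * T) = (l + L) + 2^m * (t + T)" by (simp add: algebra_simps)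
  show "take_bit m ((l + 2^m * t) + (L + 2^m * T)) = take_bit m (l + L)"
    unfolding e by (simp add: take_bit_eq_mod)
  show "drop_bit m ((l + 2^m * t) + (L + 2^m * T)) = (l + L) div 2^m + t + T"
    unfolding e by (simp add: drop_bit_eq_div)
qed

lemma even_xor_sum: "even (xor (u::nat) v) \<longleftrightarrow> even (u + v)"
  by (simp add: even_xor_iff)

lemma ok_split:
  fixes xl yl xt yt m a b g :: nat
  assumes xl: "xl < 2^m" and yl: "yl < 2^m" and xt: "xt < 2" and yt: "yt < 2"
  defines "x \<equiv> xl + 2^m * xt" and "y \<equiv> yl + 2^m * yt"
  shows "okc (Suc m) a b g x y \<longleftrightarrow>
           okc m (a mod 2^m) (b mod 2^m) (g mod 2^m) xl yl \<and>
           even (a div 2^m + b div 2^m + g div 2^m + (xl + a mod 2^m) div 2^m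
                 + (yl + b mod 2^m) div 2^m + (xor xl yl + g mod 2^m) div 2^m)"
    and "(x + a) div 2^Suc m = (xt + a div 2^m + (xl + a mod 2^m) div 2^m) div 2"
    and "(y + b) div 2^Suc m = (yt + b div 2^m + (yl + b mod 2^m) div 2^m) div 2"
    and "(xor x y + g) div 2^Suc m = ((xt + yt) mod 2 + g div 2^m + (xor xl yl + g mod 2^m) div 2^m) div 2"
proof -
  have a: "a = a mod 2^m + 2^m * (a div 2^m)" by simp
  have b: "b = b mod 2^m + 2^m * (b div 2^m)" by simp
  have g: "g = g mod 2^m + 2^m * (g div 2^m)" by simp
  have xy: "xor x y = xor xl yl + 2^m * ((xt + yt) mod 2)"
    unfolding x_def y_def using xor_split[OF xl yl xt yt] .
  have t1: "take_bit m (x + a) = take_bit m (xl + a mod 2^m)"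
    and d1: "drop_bit m (x + a) = (xl + a mod 2^m) div 2^m + xt + a div 2^m"
    unfolding x_def using split_add[where l=xl and m=m and t=xt and L="a mod 2^m" and T="a div 2^m"] a by simp_all
  have t2: "take_bit m (y + b) = take_bit m (yl + b mod 2^m)"
    and d2: "drop_bit m (y + b) = (yl + b mod 2^m) div 2^m + yt + b div 2^m"
    unfolding y_def using split_add[where l=yl and m=m and t=yt and L="b mod 2^m" and T="b div 2^m"] b by simp_all
  have t3: "take_bit m (xor x y + g) = take_bit m (xor xl yl + g mod 2^m)"
    and d3: "drop_bit m (xor x y + g) = (xor xl yl + g mod 2^m) div 2^m + (xt + yt) mod 2 + g div 2^m"
    unfolding xy using split_add[where l="xor xl yl" and m=m and t="(xt + yt) mod 2" and L="g mod 2^m" and T="g div 2^m"] g by simp_all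
  have t1': "take_bit m (xl + a mod 2^m) = take_bit m (xl + a mod 2^m)" ..
  show "okc (Suc m) a b g x y \<longleftrightarrow>
           okc m (a mod 2^m) (b mod 2^m) (g mod 2^m) xl yl \<and>
           even (a div 2^m + b div 2^m + g div 2^m + (xl + a mod 2^m) div 2^m
                 + (yl + b mod 2^m) div 2^m + (xor xl yl + g mod 2^m) div 2^m)"
  proof -
    have par: "even (xor (xor (c1 + xt + p) (c2 + yt + q)) (c3 + (xt + yt) mod 2 + r))
             \<longleftrightarrow> even (p + q + r + c1 + c2 + c3)" for c1 c2 c3 p q r :: nat
      unfolding even_xor_iff by presburger
    show ?thesis
      unfolding okc_def take_bit_Suc_zero_iff
      unfolding take_bit_xor drop_bit_xor t1 t2 t3 d1 d2 d3 par
      by (simp only: ac_simps)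
  qed
  show "(x + a) div 2^Suc m = (xt + a div 2^m + (xl + a mod 2^m) div 2^m) div 2"
    using d1 div_mult2_eq[of "x + a" "2^m" 2] by (simp add: drop_bit_eq_div power_Suc2 ac_simps)
  show "(y + b) div 2^Suc m = (yt + b div 2^m + (yl + b mod 2^m) div 2^m) div 2"
    using d2 div_mult2_eq[of "y + b" "2^m" 2] by (simp add: drop_bit_eq_div power_Suc2 ac_simps)
  show "(xor x y + g) div 2^Suc m = ((xt + yt) mod 2 + g div 2^m + (xor xl yl + g mod 2^m) div 2^m) div 2"
    using d3 div_mult2_eq[of "xor x y + g" "2^m" 2] by (simp add: drop_bit_eq_div power_Suc2 ac_simps)
qed

definition cnt :: "nat \<Rightarrow> nat \<Rightarrow> nat \<Rightarrow> nat \<Rightarrow> (nat \<Rightarrow> nat \<Rightarrow> nat \<Rightarrow> bool) \<Rightarrow> nat" where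
  "cnt m a b g Q = (\<Sum>x<2^m. \<Sum>y<2^m.
      if okc m a b g x y \<and> Q ((x + a) div 2^m) ((y + b) div 2^m) ((xor x y + g) div 2^m) then 1 else 0)"

lemma dec:
  "cnt (Suc m) a b g Q = (\<Sum>xt<2. \<Sum>yt<2. cnt m (a mod 2^m) (b mod 2^m) (g mod 2^m)
     (\<lambda>i j k. even (a div 2^m + b div 2^m + g div 2^m + i + j + k) \<and>
        Q ((xt + a div 2^m + i) div 2) ((yt + b div 2^m + j) div 2)
          (((xt + yt) mod 2 + g div 2^m + k) div 2)))"
proof -
  define F where "F x y = (if okc (Suc m) a b g x y \<and> Q ((x + a) div 2^Suc m) ((y + b) div 2^Suc m)
        ((xor x y + g) div 2^Suc m) then 1 else (0::nat))" for x y
  have "cnt (Suc m) a b g Q = (\<Sum>xt<2. \<Sum>xl<2^m. \<Sum>yt<2. \<Sum>yl<2^m. F (xl + 2^m*xt) (yl + 2^m*yt))"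
    unfolding cnt_def F_def by (simp only: sum_split_pow)
  also have "\<dots> = (\<Sum>xt<2. \<Sum>yt<2. \<Sum>xl<2^m. \<Sum>yl<2^m. F (xl + 2^m*xt) (yl + 2^m*yt))"
    by (rule sum.cong[OF refl], rule sum.swap)
  also have "\<dots> = (\<Sum>xt<2. \<Sum>yt<2. cnt m (a mod 2^m) (b mod 2^m) (g mod 2^m)
     (\<lambda>i j k. even (a div 2^m + b div 2^m + g div 2^m + i + j + k) \<and>
        Q ((xt + a div 2^m + i) div 2) ((yt + b div 2^m + j) div 2)
          (((xt + yt) mod 2 + g div 2^m + k) div 2)))"
    unfolding cnt_def
  proof (intro sum.cong refl)
    fix xt yt xl yl :: nat assume "xt \<in> {..<2}" "yt \<in> {..<2}" "xl \<in> {..<(2::nat)^m}" "yl \<in> {..<(2::nat)^m}"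
    then have h: "xt < 2" "yt < 2" "xl < 2^m" "yl < 2^m" by auto
    show "F (xl + 2^m*xt) (yl + 2^m*yt) = (if okc m (a mod 2^m) (b mod 2^m) (g mod 2^m) xl yl \<and>
       (even (a div 2^m + b div 2^m + g div 2^m + (xl + a mod 2^m) div 2^m + (yl + b mod 2^m) div 2^m
          + (xor xl yl + g mod 2^m) div 2^m) \<and>
        Q ((xt + a div 2^m + (xl + a mod 2^m) div 2^m) div 2) ((yt + b div 2^m + (yl + b mod 2^m) div 2^m) div 2)
          (((xt + yt) mod 2 + g div 2^m + (xor xl yl + g mod 2^m) div 2^m) div 2)) then 1 else 0)"
      unfolding F_def ok_split[OF h(3,4,1,2)] by (simp only: conj_assoc)
  qed
  finally show ?thesis .
qed

definition atom :: "nat \<Rightarrow> nat \<Rightarrow> nat \<Rightarrow> nat \<Rightarrow> nat \<Rightarrow> nat \<Rightarrow> nat \<Rightarrow> nat" where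
  "atom m a b g i j k = cnt m a b g (\<lambda>i' j' k'. i' = i \<and> j' = j \<and> k' = k)"

lemma carry_lt: "x < 2^m \<Longrightarrow> a < (2::nat)^m \<Longrightarrow> (x + a) div 2^m < 2"
  by (simp add: div_less_iff_less_mult)

lemma swap3: "(\<Sum>x\<in>A. \<Sum>y\<in>B. \<Sum>i\<in>I. h x y i) = (\<Sum>i\<in>I. \<Sum>x\<in>A. \<Sum>y\<in>B. h x y i)"
proof -
  have "(\<Sum>x\<in>A. \<Sum>y\<in>B. \<Sum>i\<in>I. h x y i) = (\<Sum>x\<in>A. \<Sum>i\<in>I. \<Sum>y\<in>B. h x y i)"
    by (rule sum.cong[OF refl], rule sum.swap)
  also have "\<dots> = (\<Sum>i\<in>I. \<Sum>x\<in>A. \<Sum>y\<in>B. h x y i)" by (rule sum.swap)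
  finally show ?thesis .
qed

lemma sum_if_const: "(\<Sum>x\<in>A. if P then f x else 0) = (if P then sum f A else 0)"
  by simp

lemma atoms:
  assumes "a < 2^m" "b < 2^m" "g < 2^m"
  shows "cnt m a b g Q = (\<Sum>i<2. \<Sum>j<2. \<Sum>k<2. (if Q i j k then atom m a b g i j k else 0))"
proof -
  define G where "G i j k x y = (if okc m a b g x y \<and> (x + a) div 2^m = i \<and> (y + b) div 2^m = j
          \<and> (xor x y + g) div 2^m = k then 1 else (0::nat))" for i j k x y
  have pt: "(if okc m a b g x y \<and> Q ((x + a) div 2^m) ((y + b) div 2^m) ((xor x y + g) div 2^m) then 1 else 0)
     = (\<Sum>i<2. \<Sum>j<2. \<Sum>k<2. (if Q i j k then G i j k x y else (0::nat)))"
    if "x < 2^m" "y < 2^m" for x y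
  proof -
    have tx: "take_bit m x = x" "take_bit m y = y" using that by (simp_all add: take_bit_nat_eq_self_iff)
    have "take_bit m (xor x y) = xor x y" by (simp only: take_bit_xor tx)
    then have "xor x y < 2^m" by (metis take_bit_nat_less_exp)
    then have c: "(x + a) div 2^m < 2" "(y + b) div 2^m < 2" "(xor x y + g) div 2^m < 2"
      using that assms carry_lt by auto
    have d: "u = 0 \<or> u = 1" if "u < 2" for u :: nat using that by auto
    from d[OF c(1)] d[OF c(2)] d[OF c(3)] show ?thesis
      unfolding G_def by (elim disjE) (simp_all add: sum2)
  qed
  have "cnt m a b g Q = (\<Sum>x<2^m. \<Sum>y<2^m. \<Sum>i<2. \<Sum>j<2. \<Sum>k<2. (if Q i j k then G i j k x y else 0))"
    unfolding cnt_def by (intro sum.cong refl) (simp add: pt)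
  also have "\<dots> = (\<Sum>i<2. \<Sum>x<2^m. \<Sum>y<2^m. \<Sum>j<2. \<Sum>k<2. (if Q i j k then G i j k x y else 0))"
    by (rule swap3)
  also have "\<dots> = (\<Sum>i<2. \<Sum>j<2. \<Sum>x<2^m. \<Sum>y<2^m. \<Sum>k<2. (if Q i j k then G i j k x y else 0))"
    by (rule sum.cong[OF refl], rule swap3)
  also have "\<dots> = (\<Sum>i<2. \<Sum>j<2. \<Sum>k<2. \<Sum>x<2^m. \<Sum>y<2^m. (if Q i j k then G i j k x y else 0))"
    by (rule sum.cong[OF refl], rule sum.cong[OF refl], rule swap3)
  also have "\<dots> = (\<Sum>i<2. \<Sum>j<2. \<Sum>k<2. (if Q i j k then atom m a b g i j k else 0))"
    unfolding sum_if_const atom_def cnt_def G_def by (simp only: conj_assoc)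
  finally show ?thesis .
qed

lemma arithH:
  fixes v w :: "nat \<Rightarrow> nat \<Rightarrow> nat \<Rightarrow> nat" and p q r c0 e :: nat
  assumes p: "p < 2" and q: "q < 2" and r: "r < 2" and c0: "c0 < 2" and e: "e < 2"
  and w0: "\<And>i j. w i j 1 = 0"
  and IH: "\<And>c0' e'. c0' < 2 \<Longrightarrow> e' < 2 \<Longrightarrow>
     (\<Sum>i<2. \<Sum>j<2. \<Sum>k<2. if i = c0' \<and> even (j + k + e') then v i j k else 0)
     \<le> (\<Sum>i<2. \<Sum>j<2. \<Sum>k<2. if i = c0' \<and> j = c0' then w i j k else 0)"
  shows "(\<Sum>xt<(2::nat). \<Sum>yt<(2::nat). \<Sum>i<2. \<Sum>j<2. \<Sum>k<2.
            if even (p + q + r + i + j + k) \<and> (xt + p + i) div 2 = c0 \<and>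
               even ((yt + q + j) div 2 + ((xt + yt) mod 2 + r + k) div 2 + e) then v i j k else 0)
       \<le> (\<Sum>xt<(2::nat). \<Sum>yt<(2::nat). \<Sum>i<2. \<Sum>j<2. \<Sum>k<2.
            if even (p + p + i + j + k) \<and> (xt + p + i) div 2 = c0 \<and>
               (yt + p + j) div 2 = c0 then w i j k else 0)"
proof -
  have w0': "w i j (Suc 0) = 0" for i j using w0[of i j] by simp
  have I00: "v 0 0 0 + v 0 (Suc 0) (Suc 0) \<le> w 0 0 0" using IH[of 0 0] by (simp add: sum2 w0 w0')
  have I01: "v 0 0 (Suc 0) + v 0 (Suc 0) 0 \<le> w 0 0 0" using IH[of 0 1] by (simp add: sum2 w0 w0')
  have I10: "v (Suc 0) 0 0 + v (Suc 0) (Suc 0) (Suc 0) \<le> w (Suc 0) (Suc 0) 0" using IH[of 1 0] by (simp add: sum2 w0 w0')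
  have I11: "v (Suc 0) 0 (Suc 0) + v (Suc 0) (Suc 0) 0 \<le> w (Suc 0) (Suc 0) 0" using IH[of 1 1] by (simp add: sum2 w0 w0')
  have cs: "x = 0 \<or> x = 1" if "x < 2" for x :: nat using that by auto
  show ?thesis
    apply (insert I00 I01 I10 I11 cs[OF p] cs[OF q] cs[OF r] cs[OF c0] cs[OF e])
    apply (elim disjE)
    apply (simp_all add: sum2 w0 w0')
    done
qed

lemma arithB:
  fixes v w :: "nat \<Rightarrow> nat \<Rightarrow> nat \<Rightarrow> nat" and p q r e :: nat
  assumes p: "p < 2" and q: "q < 2" and r: "r < 2" and e: "e < 2"
  and w0: "\<And>i j. w i j 1 = 0"
  and IH: "\<And>c0' e'. c0' < 2 \<Longrightarrow> e' < 2 \<Longrightarrow>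
     (\<Sum>i<2. \<Sum>j<2. \<Sum>k<2. if i = c0' \<and> even (j + k + e') then v i j k else 0)
     \<le> (\<Sum>i<2. \<Sum>j<2. \<Sum>k<2. if i = c0' \<and> j = c0' then w i j k else 0)"
  shows "(\<Sum>xt<(2::nat). \<Sum>yt<(2::nat). \<Sum>i<2. \<Sum>j<2. \<Sum>k<2.
            if even (p + q + r + i + j + k) \<and> even ((xt + p + i) div 2 + (yt + q + j) div 2 + e)
            then v i j k else 0)
       \<le> (\<Sum>xt<(2::nat). \<Sum>yt<(2::nat). \<Sum>i<2. \<Sum>j<2. \<Sum>k<2.
            if even (p + p + i + j + k) \<and> (xt + p + i) div 2 = (yt + p + j) div 2 then w i j k else 0)"
proof -
  have w0': "w i j (Suc 0) = 0" for i j using w0[of i j] by simp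
  have I00: "v 0 0 0 + v 0 (Suc 0) (Suc 0) \<le> w 0 0 0" using IH[of 0 0] by (simp add: sum2 w0 w0')
  have I01: "v 0 0 (Suc 0) + v 0 (Suc 0) 0 \<le> w 0 0 0" using IH[of 0 1] by (simp add: sum2 w0 w0')
  have I10: "v (Suc 0) 0 0 + v (Suc 0) (Suc 0) (Suc 0) \<le> w (Suc 0) (Suc 0) 0" using IH[of 1 0] by (simp add: sum2 w0 w0')
  have I11: "v (Suc 0) 0 (Suc 0) + v (Suc 0) (Suc 0) 0 \<le> w (Suc 0) (Suc 0) 0" using IH[of 1 1] by (simp add: sum2 w0 w0')
  have cs: "x = 0 \<or> x = 1" if "x < 2" for x :: nat using that by auto
  show ?thesis
    apply (insert I00 I01 I10 I11 cs[OF p] cs[OF q] cs[OF r] cs[OF e])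
    apply (elim disjE)
    apply (simp_all add: sum2 w0 w0')
    done
qed

lemma arithX:
  fixes v w :: "nat \<Rightarrow> nat \<Rightarrow> nat \<Rightarrow> nat" and p q r :: nat
  assumes p: "p < 2" and q: "q < 2" and r: "r < 2"
  and w0: "\<And>i j. w i j 1 = 0"
  and IH: "\<And>c0' e'. c0' < 2 \<Longrightarrow> e' < 2 \<Longrightarrow>
     (\<Sum>i<2. \<Sum>j<2. \<Sum>k<2. if i = c0' \<and> even (j + k + e') then v i j k else 0)
     \<le> (\<Sum>i<2. \<Sum>j<2. \<Sum>k<2. if i = c0' \<and> j = c0' then w i j k else 0)"
  shows "(\<Sum>xt<(2::nat). \<Sum>yt<(2::nat). \<Sum>i<2. \<Sum>j<2. \<Sum>k<2.
            if even (p + q + r + i + j + k) \<and> True then v i j k else 0)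
       \<le> (\<Sum>xt<(2::nat). \<Sum>yt<(2::nat). \<Sum>i<2. \<Sum>j<2. \<Sum>k<2.
            if even (p + p + i + j + k) \<and> True then w i j k else 0)"
proof -
  have w0': "w i j (Suc 0) = 0" for i j using w0[of i j] by simp
  have I00: "v 0 0 0 + v 0 (Suc 0) (Suc 0) \<le> w 0 0 0" using IH[of 0 0] by (simp add: sum2 w0 w0')
  have I01: "v 0 0 (Suc 0) + v 0 (Suc 0) 0 \<le> w 0 0 0" using IH[of 0 1] by (simp add: sum2 w0 w0')
  have I10: "v (Suc 0) 0 0 + v (Suc 0) (Suc 0) (Suc 0) \<le> w (Suc 0) (Suc 0) 0" using IH[of 1 0] by (simp add: sum2 w0 w0')
  have I11: "v (Suc 0) 0 (Suc 0) + v (Suc 0) (Suc 0) 0 \<le> w (Suc 0) (Suc 0) 0" using IH[of 1 1] by (simp add: sum2 w0 w0')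
  have cs: "x = 0 \<or> x = 1" if "x < 2" for x :: nat using that by auto
  show ?thesis
    apply (insert I00 I01 I10 I11 cs[OF p] cs[OF q] cs[OF r])
    apply (elim disjE)
    apply (simp_all add: sum2 w0 w0')
    done
qed

lemma arithId:
  fixes w :: "nat \<Rightarrow> nat \<Rightarrow> nat \<Rightarrow> nat" and p :: nat
  assumes p: "p < 2" and w0: "\<And>i j. w i j 1 = 0"
  shows "(\<Sum>xt<(2::nat). \<Sum>yt<(2::nat). \<Sum>i<2. \<Sum>j<2. \<Sum>k<2.
            if even (p + p + i + j + k) \<and> True then w i j k else 0)
       = 4 * (\<Sum>i<2. \<Sum>j<2. \<Sum>k<2. if i = j then w i j k else 0)"
    and "(\<Sum>xt<(2::nat). \<Sum>yt<(2::nat). \<Sum>i<2. \<Sum>j<2. \<Sum>k<2.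
            if even (p + p + i + j) then w i j k else 0)
       = 4 * (\<Sum>i<2. \<Sum>j<2. \<Sum>k<2. if i = j then w i j k else 0)"
proof -
  have w0': "w i j (Suc 0) = 0" for i j using w0[of i j] by simp
  have cs: "x = 0 \<or> x = 1" if "x < 2" for x :: nat using that by auto
  show "(\<Sum>xt<(2::nat). \<Sum>yt<(2::nat). \<Sum>i<2. \<Sum>j<2. \<Sum>k<2.
            if even (p + p + i + j + k) \<and> True then w i j k else 0)
       = 4 * (\<Sum>i<2. \<Sum>j<2. \<Sum>k<2. if i = j then w i j k else 0)"
    using cs[OF p] by (elim disjE) (simp_all add: sum2 w0 w0')
  show "(\<Sum>xt<(2::nat). \<Sum>yt<(2::nat). \<Sum>i<2. \<Sum>j<2. \<Sum>k<2.
            if even (p + p + i + j) then w i j k else 0)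
       = 4 * (\<Sum>i<2. \<Sum>j<2. \<Sum>k<2. if i = j then w i j k else 0)"
    using cs[OF p] by (elim disjE) (simp_all add: sum2 w0 w0')
qed

lemma xor_lt: "x < 2^m \<Longrightarrow> y < 2^m \<Longrightarrow> xor x y < (2::nat)^m"
proof -
  assume that: "x < 2^m" "y < 2^m"
  have tx: "take_bit m x = x" "take_bit m y = y" using that by (simp_all add: take_bit_nat_eq_self_iff)
  have "take_bit m (xor x y) = xor x y" by (simp only: take_bit_xor tx)
  then show "xor x y < 2^m" by (metis take_bit_nat_less_exp)
qed

lemma atom_g0: "atom m a b 0 i j 1 = 0"
  unfolding atom_def cnt_def
  by (rule sum.neutral, intro ballI, rule sum.neutral) (auto dest: xor_lt)

lemma div_lt2: "(a::nat) < 2^Suc m \<Longrightarrow> a div 2^m < 2"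
  by (simp add: div_less_iff_less_mult mult.commute)

lemma H:
  "a < 2^m \<Longrightarrow> b < 2^m \<Longrightarrow> g < 2^m \<Longrightarrow> c0 < 2 \<Longrightarrow> e < 2 \<Longrightarrow>
   cnt m a b g (\<lambda>i j k. i = c0 \<and> even (j + k + e)) \<le> cnt m a a 0 (\<lambda>i j k. i = c0 \<and> j = c0)"
proof (induction m arbitrary: a b g c0 e)
  case 0
  then show ?case by (simp add: cnt_def okc_def)
next
  case (Suc m)
  define A where "A = a mod 2^m"
  define B where "B = b mod 2^m"
  define G where "G = g mod 2^m"
  have lt: "A < 2^m" "B < 2^m" "G < 2^m" by (simp_all add: A_def B_def G_def)
  have z: "(0::nat) < 2^m" by simp
  have pl: "a div 2^m < 2" "b div 2^m < 2" "g div 2^m < 2"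
    using Suc.prems(1-3) by (simp_all add: div_lt2)
  define v where "v = atom m A B G"
  define w where "w = atom m A A 0"
  have w0: "w i j 1 = 0" for i j unfolding w_def by (rule atom_g0)
  have IH: "(\<Sum>i<2. \<Sum>j<2. \<Sum>k<2. if i = c0' \<and> even (j + k + e') then v i j k else 0)
     \<le> (\<Sum>i<2. \<Sum>j<2. \<Sum>k<2. if i = c0' \<and> j = c0' then w i j k else 0)"
    if "c0' < 2" "e' < 2" for c0' e'
    using Suc.IH[OF lt that] unfolding atoms[OF lt] atoms[OF lt(1) lt(1) z] v_def w_def .
  show ?case
    unfolding dec
    unfolding A_def[symmetric] B_def[symmetric] G_def[symmetric]
    unfolding div_0 mod_0 add_0_right
    unfolding atoms[OF lt] atoms[OF lt(1) lt(1) z]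
    unfolding v_def[symmetric] w_def[symmetric]
    by (rule arithH[OF pl Suc.prems(4,5) w0 IH])
qed

lemma KB:
  assumes "a < 2^Suc m" "b < 2^Suc m" "h < 2^Suc m" "e < 2"
  shows "cnt (Suc m) a b h (\<lambda>i j k. even (i + j + e)) \<le> cnt (Suc m) a a 0 (\<lambda>i j k. i = j)"
proof -
  define A where "A = a mod 2^m"
  define B where "B = b mod 2^m"
  define G where "G = h mod 2^m"
  have lt: "A < 2^m" "B < 2^m" "G < 2^m" by (simp_all add: A_def B_def G_def)
  have z: "(0::nat) < 2^m" by simp
  have pl: "a div 2^m < 2" "b div 2^m < 2" "h div 2^m < 2"
    using assms(1-3) by (simp_all add: div_lt2)
  define v where "v = atom m A B G"
  define w where "w = atom m A A 0"
  have w0: "w i j 1 = 0" for i j unfolding w_def by (rule atom_g0)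
  have IH: "(\<Sum>i<2. \<Sum>j<2. \<Sum>k<2. if i = c0' \<and> even (j + k + e') then v i j k else 0)
     \<le> (\<Sum>i<2. \<Sum>j<2. \<Sum>k<2. if i = c0' \<and> j = c0' then w i j k else 0)"
    if "c0' < 2" "e' < 2" for c0' e'
    using H[OF lt that] unfolding atoms[OF lt] atoms[OF lt(1) lt(1) z] v_def w_def .
  show ?thesis
    unfolding dec
    unfolding A_def[symmetric] B_def[symmetric] G_def[symmetric]
    unfolding div_0 mod_0 add_0_right
    unfolding atoms[OF lt] atoms[OF lt(1) lt(1) z]
    unfolding v_def[symmetric] w_def[symmetric]
    by (rule arithB[OF pl assms(4) w0 IH])
qed

lemma XB:
  assumes "a < 2^Suc m" "b < 2^Suc m" "g < 2^Suc m"
  shows "cnt (Suc m) a b g (\<lambda>i j k. True) \<le> cnt (Suc m) a a 0 (\<lambda>i j k. True)"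
proof -
  define A where "A = a mod 2^m"
  define B where "B = b mod 2^m"
  define G where "G = g mod 2^m"
  have lt: "A < 2^m" "B < 2^m" "G < 2^m" by (simp_all add: A_def B_def G_def)
  have z: "(0::nat) < 2^m" by simp
  have pl: "a div 2^m < 2" "b div 2^m < 2" "g div 2^m < 2"
    using assms(1-3) by (simp_all add: div_lt2)
  define v where "v = atom m A B G"
  define w where "w = atom m A A 0"
  have w0: "w i j 1 = 0" for i j unfolding w_def by (rule atom_g0)
  have IH: "(\<Sum>i<2. \<Sum>j<2. \<Sum>k<2. if i = c0' \<and> even (j + k + e') then v i j k else 0)
     \<le> (\<Sum>i<2. \<Sum>j<2. \<Sum>k<2. if i = c0' \<and> j = c0' then w i j k else 0)"
    if "c0' < 2" "e' < 2" for c0' e'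
    using H[OF lt that] unfolding atoms[OF lt] atoms[OF lt(1) lt(1) z] v_def w_def .
  show ?thesis
    unfolding dec
    unfolding A_def[symmetric] B_def[symmetric] G_def[symmetric]
    unfolding div_0 mod_0 add_0_right
    unfolding atoms[OF lt] atoms[OF lt(1) lt(1) z]
    unfolding v_def[symmetric] w_def[symmetric]
    by (rule arithX[OF pl w0 IH])
qed

lemma XId:
  assumes "a < 2^Suc m"
  shows "cnt (Suc m) a a 0 (\<lambda>i j k. True) = 4 * cnt m (a mod 2^m) (a mod 2^m) 0 (\<lambda>i j k. i = j)"
proof -
  define A where "A = a mod 2^m"
  have lt: "A < 2^m" by (simp add: A_def)
  have z: "(0::nat) < 2^m" by simp
  have pl: "a div 2^m < 2" using assms by (simp add: div_lt2)
  define w where "w = atom m A A 0"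
  have w0: "w i j 1 = 0" for i j unfolding w_def by (rule atom_g0)
  show ?thesis
    unfolding dec
    unfolding A_def[symmetric]
    unfolding div_0 mod_0 add_0_right
    unfolding atoms[OF lt lt z]
    unfolding w_def[symmetric]
    using arithId(1)[of "a div 2^m" w] pl w0 by simp
qed

lemma xor_eq0: "xor (u::nat) v = 0 \<longleftrightarrow> u = v"
proof
  assume h: "xor u v = 0"
  have "bit u n = bit v n" for n
  proof -
    have "\<not> bit (xor u v) n" using h by simp
    then show ?thesis by (simp add: bit_xor_iff)
  qed
  then show "u = v" by (simp add: bit_eq_iff)
qed simp

lemma tb_suc: "take_bit (Suc m) (z::nat) = take_bit m z + 2^m * (drop_bit m z mod 2)"
proof -
  have "take_bit (Suc m) z = z mod (2^m * 2)"
    by (metis take_bit_eq_mod power_Suc2)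
  also have "\<dots> = z mod 2^m + 2^m * (z div 2^m mod 2)"
    by (simp add: mod_mult2_eq)
  finally show ?thesis by (simp add: take_bit_eq_mod drop_bit_eq_div)
qed

lemma xor_card:
  "card {(x, y). x < 2^n \<and> y < 2^n \<and> xor ((x + a) mod 2^n) ((y + b) mod 2^n) = (xor x y + g) mod 2^n}
   = cnt n a b g (\<lambda>i j k. True)"
  unfolding card_pairs_sum cnt_def okc_def take_bit_eq_mod[symmetric]
  unfolding take_bit_xor xor_eq0 by simp

lemma rotl_split:
  assumes "ul < 2^m" "ut < 2"
  shows "rotl (Suc m) 1 (ul + 2^m * ut) = 2 * ul + ut"
proof -
  have "(ul + 2^m * ut) * 2 = 2 * ul + 2^Suc m * ut" by simp
  moreover have "2 * ul < 2^Suc m" using assms by simp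
  ultimately have "((ul + 2^m * ut) * 2) mod 2^Suc m = 2 * ul"
    by (metis mod_less mod_mult_self2 mult.commute)
  moreover have "(ul + 2^m * ut) div 2^m = ut" using assms by simp
  ultimately show ?thesis unfolding rotl_def by simp
qed

lemma rot_eq:
  fixes ul' ut' ul ut g m :: nat
  assumes "ul' < 2^m" "ut' < 2" "ut < 2"
  shows "(2 * ul' + ut' = (2 * ul + ut + g) mod 2^Suc m) \<longleftrightarrow>
         (ut' = (ut + g) mod 2 \<and> ul' = (ul + g div 2 + (ut + g mod 2) div 2) mod 2^m)"
proof -
  define N where "N = 2 * ul + ut + g"
  have "N mod 2^Suc m = N mod (2 * 2^m)" by simp
  also have "\<dots> = 2 * (N div 2 mod 2^m) + N mod 2" by (rule mod_mult2_eq)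
  finally have e1: "N mod 2^Suc m = 2 * (N div 2 mod 2^m) + N mod 2" .
  have e2: "N div 2 = ul + g div 2 + (ut + g mod 2) div 2" unfolding N_def by presburger
  have e3: "N mod 2 = (ut + g) mod 2" unfolding N_def by presburger
  have gen: "Y < 2 \<Longrightarrow> (2 * ul' + ut' = 2 * X + Y) \<longleftrightarrow> (ut' = Y \<and> ul' = X)" for X Y :: nat
    using assms(2) by presburger
  show ?thesis unfolding N_def[symmetric] e1 e2 e3 by (rule gen) simp
qed

lemma mod2_eq_even: "((a::nat) mod 2 = b mod 2) \<longleftrightarrow> (even a \<longleftrightarrow> even b)"
  by presburger

lemma xor_mod2: "(xor u v) mod 2 = ((u::nat) + v) mod 2"
proof -
  have "even (xor u v) \<longleftrightarrow> even (u + v)" by (simp add: even_xor_iff)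
  then show ?thesis by presburger
qed

lemma xr_point:
  fixes xl yl xt yt m a b g :: nat
  assumes xl: "xl < 2^m" and yl: "yl < 2^m" and xt: "xt < 2" and yt: "yt < 2"
  defines "x \<equiv> xl + 2^m * xt" and "y \<equiv> yl + 2^m * yt"
  shows "rotl (Suc m) 1 (xor ((x + a) mod 2^Suc m) ((y + b) mod 2^Suc m)) = (rotl (Suc m) 1 (xor x y) + g) mod 2^Suc m
     \<longleftrightarrow> okc m (a mod 2^m) (b mod 2^m) ((g div 2 + ((xt + yt) mod 2) * (g mod 2)) mod 2^m) xl yl \<and>
        even (a div 2^m + b div 2^m + g mod 2 + (xl + a mod 2^m) div 2^m + (yl + b mod 2^m) div 2^m)"
proof -
  define A where "A = a mod 2^m"
  define B where "B = b mod 2^m"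
  define p where "p = a div 2^m"
  define q where "q = b div 2^m"
  define c1 where "c1 = (xl + A) div 2^m"
  define c2 where "c2 = (yl + B) div 2^m"
  have a: "a = A + 2^m * p" by (simp add: A_def p_def)
  have b: "b = B + 2^m * q" by (simp add: B_def q_def)
  have t1: "take_bit m (x + a) = take_bit m (xl + A)"
    and d1: "drop_bit m (x + a) = c1 + xt + p"
    unfolding x_def c1_def using split_add[where l=xl and m=m and t=xt and L="A" and T="p"] a by simp_all
  have t2: "take_bit m (y + b) = take_bit m (yl + B)"
    and d2: "drop_bit m (y + b) = c2 + yt + q"
    unfolding y_def c2_def using split_add[where l=yl and m=m and t=yt and L="B" and T="q"] b by simp_all
  define ul' where "ul' = xor (take_bit m (xl + A)) (take_bit m (yl + B))"
  define ut' where "ut' = (c1 + xt + p + (c2 + yt + q)) mod 2"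
  define ul where "ul = xor xl yl"
  define ut where "ut = (xt + yt) mod 2"
  have U: "xor ((x + a) mod 2^Suc m) ((y + b) mod 2^Suc m) = ul' + 2^m * ut'"
  proof -
    have "xor ((x + a) mod 2^Suc m) ((y + b) mod 2^Suc m) = take_bit (Suc m) (xor (x + a) (y + b))"
      by (simp only: take_bit_eq_mod[symmetric] take_bit_xor)
    also have "\<dots> = ul' + 2^m * ut'"
      unfolding tb_suc unfolding take_bit_xor drop_bit_xor t1 t2 d1 d2 xor_mod2 ul'_def ut'_def ..
    finally show ?thesis .
  qed
  have ul'lt: "ul' < 2^m" unfolding ul'_def by (intro xor_lt take_bit_nat_less_exp)
  have ut'lt: "ut' < 2" unfolding ut'_def by simp
  have utlt: "ut < 2" unfolding ut_def by simp
  have ullt: "ul < 2^m" unfolding ul_def using xl yl by (rule xor_lt)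
  have XY: "xor x y = ul + 2^m * ut"
    unfolding x_def y_def ul_def ut_def by (rule xor_split[OF xl yl xt yt])
  have LHS: "rotl (Suc m) 1 (xor ((x + a) mod 2^Suc m) ((y + b) mod 2^Suc m)) = 2 * ul' + ut'"
    unfolding U by (rule rotl_split[OF ul'lt ut'lt])
  have RHS: "rotl (Suc m) 1 (xor x y) = 2 * ul + ut"
    unfolding XY by (rule rotl_split[OF ullt utlt])
  have par: "ut' = (ut + g) mod 2 \<longleftrightarrow> even (p + q + g mod 2 + c1 + c2)"
    unfolding ut'_def ut_def mod2_eq_even by (simp only: even_add even_mod_2_iff) argo
  have ok: "okc m A B ((g div 2 + ut * (g mod 2)) mod 2^m) xl yl \<longleftrightarrow>
            ul' = (ul + g div 2 + (ut + g mod 2) div 2) mod 2^m"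
  proof -
    have e: "(ut + g mod 2) div 2 = ut * (g mod 2)" 
    proof -
      have "ut = 0 \<or> ut = 1" using utlt by auto
      then show ?thesis by (elim disjE) (simp, presburger)
    qed
    have "okc m A B ((g div 2 + ut * (g mod 2)) mod 2^m) xl yl \<longleftrightarrow>
          ul' = take_bit m (ul + (g div 2 + ut * (g mod 2)) mod 2^m)"
      unfolding okc_def take_bit_xor xor_eq0 ul'_def ul_def
      by (simp only: take_bit_eq_mod mod_add_left_eq mod_add_right_eq)
    also have "\<dots> \<longleftrightarrow> ul' = (ul + g div 2 + (ut + g mod 2) div 2) mod 2^m"
      unfolding e take_bit_eq_mod by (simp add: mod_add_right_eq add.assoc)
    finally show ?thesis .
  qed
  show ?thesis
    unfolding LHS RHS rot_eq[OF ul'lt ut'lt utlt] par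
    unfolding A_def[symmetric] B_def[symmetric] p_def[symmetric] q_def[symmetric]
      c1_def[symmetric] c2_def[symmetric] ut_def[symmetric] ok
    by blast
qed

lemma XR_card:
  "card {(x, y). x < 2^Suc m \<and> y < 2^Suc m \<and>
      rotl (Suc m) 1 (xor ((x + a) mod 2^Suc m) ((y + b) mod 2^Suc m)) = (rotl (Suc m) 1 (xor x y) + g) mod 2^Suc m}
   = (\<Sum>xt<2. \<Sum>yt<2. cnt m (a mod 2^m) (b mod 2^m) ((g div 2 + ((xt + yt) mod 2) * (g mod 2)) mod 2^m)
        (\<lambda>i j k. even (a div 2^m + b div 2^m + g mod 2 + i + j)))"
proof -
  define F where "F x y = (if rotl (Suc m) 1 (xor ((x + a) mod 2^Suc m) ((y + b) mod 2^Suc m))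
      = (rotl (Suc m) 1 (xor x y) + g) mod 2^Suc m then 1 else (0::nat))" for x y
  have "card {(x, y). x < 2^Suc m \<and> y < 2^Suc m \<and>
      rotl (Suc m) 1 (xor ((x + a) mod 2^Suc m) ((y + b) mod 2^Suc m)) = (rotl (Suc m) 1 (xor x y) + g) mod 2^Suc m}
      = (\<Sum>x<2^Suc m. \<Sum>y<2^Suc m. F x y)"
    unfolding card_pairs_sum F_def ..
  also have "\<dots> = (\<Sum>xt<2. \<Sum>xl<2^m. \<Sum>yt<2. \<Sum>yl<2^m. F (xl + 2^m*xt) (yl + 2^m*yt))"
    by (simp only: sum_split_pow)
  also have "\<dots> = (\<Sum>xt<2. \<Sum>yt<2. \<Sum>xl<2^m. \<Sum>yl<2^m. F (xl + 2^m*xt) (yl + 2^m*yt))"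
    by (rule sum.cong[OF refl], rule sum.swap)
  also have "\<dots> = (\<Sum>xt<2. \<Sum>yt<2. cnt m (a mod 2^m) (b mod 2^m) ((g div 2 + ((xt + yt) mod 2) * (g mod 2)) mod 2^m)
        (\<lambda>i j k. even (a div 2^m + b div 2^m + g mod 2 + i + j)))"
    unfolding cnt_def
  proof (intro sum.cong refl)
    fix xt yt xl yl :: nat
    assume "xt \<in> {..<2}" "yt \<in> {..<2}" "xl \<in> {..<2^m}" "yl \<in> {..<2^m}"
    then have h: "xt < 2" "yt < 2" "xl < 2^m" "yl < 2^m" by auto
    show "F (xl + 2^m*xt) (yl + 2^m*yt) = (if okc m (a mod 2^m) (b mod 2^m) ((g div 2 + ((xt + yt) mod 2) * (g mod 2)) mod 2^m) xl yl \<and>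
       even (a div 2^m + b div 2^m + g mod 2 + (xl + a mod 2^m) div 2^m + (yl + b mod 2^m) div 2^m) then 1 else 0)"
      unfolding F_def xr_point[OF h(3,4,1,2)] ..
  qed
  finally show ?thesis .
qed

theorem corollary3:
  fixes n \<alpha> :: nat
  assumes "n \<ge> 2" and "\<alpha> < 2 ^ n"
  shows "Max ((\<lambda>(\<beta>, \<gamma>). adp_XR n 1 \<alpha> \<beta> \<gamma>) ` ({..<2 ^ n} \<times> {..<2 ^ n}))
           = adp_xor n \<alpha> \<alpha> 0
       \<and> adp_xor n \<alpha> \<alpha> 0
           = Max ((\<lambda>(\<beta>, \<gamma>). adp_xor n \<alpha> \<beta> \<gamma>) ` ({..<2 ^ n} \<times> {..<2 ^ n}))"
proof -
  define m where "m = n - 2"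
  define M where "M = Suc m"
  have nM: "n = Suc M" using assms(1) unfolding M_def m_def by arith
  define A where "A = \<alpha> mod 2^M"
  define p where "p = \<alpha> div 2^M"
  have Alt: "A < 2^M" unfolding A_def by simp
  have z: "(0::nat) < 2^M" by simp
  have al: "\<alpha> < 2^Suc M" using assms(2) nM by simp
  have pl: "p < 2" unfolding p_def using al by (rule div_lt2)
  define R where "R = cnt M A A 0 (\<lambda>i j k. i = j)"
  define XRS where "XRS b g = card {(x, y). x < 2^Suc M \<and> y < 2^Suc M \<and>
      rotl (Suc M) 1 (xor ((x + \<alpha>) mod 2^Suc M) ((y + b) mod 2^Suc M)) = (rotl (Suc M) 1 (xor x y) + g) mod 2^Suc M}" for b g
  have vX: "adp_xor n \<alpha> b g = real (cnt n \<alpha> b g (\<lambda>i j k. True)) / 4^n" for b g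
    unfolding adp_xor_def adp_def xor_card ..
  have vR: "adp_XR n 1 \<alpha> b g = real (XRS b g) / 4^n" for b g
    unfolding adp_XR_def adp_def XRS_def nM ..
  have base: "cnt n \<alpha> \<alpha> 0 (\<lambda>i j k. True) = 4 * R"
    unfolding nM R_def A_def by (rule XId[OF al])
  have xle: "cnt n \<alpha> b g (\<lambda>i j k. True) \<le> 4 * R" if "b < 2^n" "g < 2^n" for b g
  proof -
    have bl: "b < 2^Suc M" "g < 2^Suc M" using that nM by simp_all
    have "cnt n \<alpha> b g (\<lambda>i j k. True) \<le> cnt n \<alpha> \<alpha> 0 (\<lambda>i j k. True)"
      unfolding nM by (rule XB[OF al bl])
    then show ?thesis using base by linarith
  qed
  have rle: "XRS b g \<le> 4 * R" if "b < 2^n" "g < 2^n" for b g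
  proof -
    have bl: "b < 2^Suc M" "g < 2^Suc M" using that nM by simp_all
    have t: "cnt M A (b mod 2^M) ((g div 2 + ((xt + yt) mod 2) * (g mod 2)) mod 2^M)
        (\<lambda>i j k. even (\<alpha> div 2^M + b div 2^M + g mod 2 + i + j)) \<le> R" for xt yt :: nat
    proof -
      define e where "e = (\<alpha> div 2^M + b div 2^M + g mod 2) mod 2"
      have el: "e < 2" unfolding e_def by simp
      have pe: "(\<lambda>i j k. even (\<alpha> div 2^M + b div 2^M + g mod 2 + i + j)) = (\<lambda>i j k. even (i + j + e))"
        unfolding e_def by (intro ext) (simp only: even_add even_mod_2_iff; argo)
      have l1: "A < 2^Suc m" "b mod 2^M < 2^Suc m" using Alt unfolding M_def by simp_all
      have l2: "(g div 2 + ((xt + yt) mod 2) * (g mod 2)) mod 2^M < 2^Suc m" unfolding M_def by simp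
      have "cnt (Suc m) A (b mod 2^M) ((g div 2 + ((xt + yt) mod 2) * (g mod 2)) mod 2^M) (\<lambda>i j k. even (i + j + e))
            \<le> cnt (Suc m) A A 0 (\<lambda>i j k. i = j)"
        by (rule KB[OF l1 l2 el])
      then have "cnt M A (b mod 2^M) ((g div 2 + ((xt + yt) mod 2) * (g mod 2)) mod 2^M) (\<lambda>i j k. even (i + j + e))
            \<le> cnt M A A 0 (\<lambda>i j k. i = j)" unfolding M_def .
      then show ?thesis unfolding pe R_def .
    qed
    have "XRS b g = (\<Sum>xt<2. \<Sum>yt<2. cnt M A (b mod 2^M) ((g div 2 + ((xt + yt) mod 2) * (g mod 2)) mod 2^M)
        (\<lambda>i j k. even (\<alpha> div 2^M + b div 2^M + g mod 2 + i + j)))"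
      unfolding XRS_def XR_card A_def ..
    also have "\<dots> \<le> (\<Sum>xt<(2::nat). \<Sum>yt<(2::nat). R)"
      by (intro sum_mono t)
    also have "\<dots> = 4 * R" by simp
    finally show ?thesis .
  qed
  have req: "XRS \<alpha> 0 = 4 * R"
  proof -
    define w where "w = atom M A A 0"
    have w0: "w i j 1 = 0" for i j unfolding w_def by (rule atom_g0)
    have "XRS \<alpha> 0 = (\<Sum>xt<(2::nat). \<Sum>yt<(2::nat). cnt M A A 0 (\<lambda>i j k. even (p + p + i + j)))"
      unfolding XRS_def XR_card A_def[symmetric] p_def[symmetric]
      by (simp only: div_0 mod_0 mult_0_right add_0_right)
    also have "\<dots> = (\<Sum>xt<(2::nat). \<Sum>yt<(2::nat). \<Sum>i<2. \<Sum>j<2. \<Sum>k<2. if even (p + p + i + j) then w i j k else 0)"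
      unfolding atoms[OF Alt Alt z] w_def ..
    also have "\<dots> = 4 * (\<Sum>i<2. \<Sum>j<2. \<Sum>k<2. if i = j then w i j k else 0)"
      by (rule arithId(2)[of p w, OF pl w0])
    also have "\<dots> = 4 * R"
      unfolding R_def atoms[OF Alt Alt z] w_def ..
    finally show ?thesis .
  qed
  have fin: "finite ({..<(2::nat) ^ n} \<times> {..<(2::nat) ^ n})" by simp
  have mem: "(\<alpha>, 0) \<in> {..<(2::nat) ^ n} \<times> {..<(2::nat) ^ n}" using assms(2) by simp
  have target: "adp_xor n \<alpha> \<alpha> 0 = real (4 * R) / 4^n" unfolding vX base ..
  have M1: "Max ((\<lambda>(\<beta>, \<gamma>). adp_XR n 1 \<alpha> \<beta> \<gamma>) ` ({..<2 ^ n} \<times> {..<2 ^ n})) = adp_xor n \<alpha> \<alpha> 0"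
  proof (rule Max_eqI)
    show "finite ((\<lambda>(\<beta>, \<gamma>). adp_XR n 1 \<alpha> \<beta> \<gamma>) ` ({..<2 ^ n} \<times> {..<2 ^ n}))" using fin by simp
  next
    fix y assume "y \<in> (\<lambda>(\<beta>, \<gamma>). adp_XR n 1 \<alpha> \<beta> \<gamma>) ` ({..<2 ^ n} \<times> {..<2 ^ n})"
    then obtain b g where bg: "b < 2^n" "g < 2^n" and y: "y = adp_XR n 1 \<alpha> b g" by auto
    have "real (XRS b g) \<le> real (4 * R)" using rle[OF bg] by linarith
    then show "y \<le> adp_xor n \<alpha> \<alpha> 0" unfolding y vR target by (intro divide_right_mono) simp_all
  next
    have eqXR: "adp_XR n 1 \<alpha> \<alpha> 0 = adp_xor n \<alpha> \<alpha> 0" unfolding vR target req ..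
    show "adp_xor n \<alpha> \<alpha> 0 \<in> (\<lambda>(\<beta>, \<gamma>). adp_XR n 1 \<alpha> \<beta> \<gamma>) ` ({..<2 ^ n} \<times> {..<2 ^ n})"
      by (rule image_eqI[OF _ mem]) (simp only: prod.case eqXR)
  qed
  have M2: "Max ((\<lambda>(\<beta>, \<gamma>). adp_xor n \<alpha> \<beta> \<gamma>) ` ({..<2 ^ n} \<times> {..<2 ^ n})) = adp_xor n \<alpha> \<alpha> 0"
  proof (rule Max_eqI)
    show "finite ((\<lambda>(\<beta>, \<gamma>). adp_xor n \<alpha> \<beta> \<gamma>) ` ({..<2 ^ n} \<times> {..<2 ^ n}))" using fin by simp
  next
    fix y assume "y \<in> (\<lambda>(\<beta>, \<gamma>). adp_xor n \<alpha> \<beta> \<gamma>) ` ({..<2 ^ n} \<times> {..<2 ^ n})"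
    then obtain b g where bg: "b < 2^n" "g < 2^n" and y: "y = adp_xor n \<alpha> b g" by auto
    have "real (cnt n \<alpha> b g (\<lambda>i j k. True)) \<le> real (4 * R)" using xle[OF bg] by linarith
    then show "y \<le> adp_xor n \<alpha> \<alpha> 0" unfolding y vX[of b g] target by (intro divide_right_mono) simp_all
  next
    show "adp_xor n \<alpha> \<alpha> 0 \<in> (\<lambda>(\<beta>, \<gamma>). adp_xor n \<alpha> \<beta> \<gamma>) ` ({..<2 ^ n} \<times> {..<2 ^ n})"
      by (rule image_eqI[OF _ mem]) simp
  qed
  show ?thesis using M1 M2 by simp
qed

end
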